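(* Let $v$ be a vertex of a graph $G$ and let $H$ be a subgraph of $G$ containing $v$ and containing at least one vertex from each connected component of $G-v$. Then any $k$ level-disjoint partitions of $H$ rooted in $v$ can be extended to $k$ level-disjoint partitions of $G$ rooted in $v$ (i.e., there exist $k$ $v$-rooted level-disjoint partitions of $G$ whose restrictions to $V(H)$ are the given ones, levelwise).
   Context: All graphs are simple and undirected; $G$ is connected. For $S\subseteq V(G)$, $N(S)$ denotes the set of vertices adjacent to some vertex of $S$. A level partition of a graph $G$ is a tuple $\mathcal{S}=(S_0,\dots,S_h)$ of pairwise disjoint sets (levels) with union $V(G)$ such that $S_i\subseteq N(S_{i-1})$ for every $1\le i\le h$ (neighborhoods taken in that graph); $h=h(\mathcal{S})$ is its height. It is rooted in $v$ if $S_0=\{v\}$. Two level partitions $\mathcal{S},\mathcal{T}$ are level-disjoint if $S_i\cap T_i=\emptyset$ for every $1\le i\le\min(h(\mathcal{S}),h(\mathcal{T}))$; $k$ level partitions are level-disjoint partitions if they are pairwise level-disjoint. $G-v$ denotes $G$ with $v$ and its incident edges removed. *)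

theory Defs
  imports Main
begin

definition graph :: "'a set \<Rightarrow> ('a \<Rightarrow> 'a \<Rightarrow> bool) \<Rightarrow> bool" where
  "graph V E \<longleftrightarrow> finite V \<and> (\<forall>x y. E x y \<longrightarrow> x \<in> V \<and> y \<in> V \<and> x \<noteq> y \<and> E y x)"

definition connected_graph :: "'a set \<Rightarrow> ('a \<Rightarrow> 'a \<Rightarrow> bool) \<Rightarrow> bool" where
  "connected_graph V E \<longleftrightarrow> (\<forall>x\<in>V. \<forall>y\<in>V. E\<^sup>*\<^sup>* x y)"

definition subgraph :: "'a set \<Rightarrow> ('a \<Rightarrow> 'a \<Rightarrow> bool) \<Rightarrow> 'a set \<Rightarrow> ('a \<Rightarrow> 'a \<Rightarrow> bool) \<Rightarrow> bool" where
  "subgraph VH EH V E \<longleftrightarrow> graph VH EH \<and> VH \<subseteq> V \<and> (\<forall>x y. EH x y \<longrightarrow> E x y)"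

text \<open>G - v: delete v and its incident edges.\<close>
definition del_edges :: "('a \<Rightarrow> 'a \<Rightarrow> bool) \<Rightarrow> 'a \<Rightarrow> 'a \<Rightarrow> 'a \<Rightarrow> bool" where
  "del_edges E v = (\<lambda>x y. E x y \<and> x \<noteq> v \<and> y \<noteq> v)"

definition nbhd :: "('a \<Rightarrow> 'a \<Rightarrow> bool) \<Rightarrow> 'a set \<Rightarrow> 'a set" where
  "nbhd E S = {u. \<exists>w\<in>S. E w u}"

definition level_partition :: "'a set \<Rightarrow> ('a \<Rightarrow> 'a \<Rightarrow> bool) \<Rightarrow> 'a set list \<Rightarrow> bool" where
  "level_partition V E S \<longleftrightarrow> S \<noteq> [] \<and> \<Union>(set S) = V
     \<and> (\<forall>i<length S. \<forall>j<length S. i \<noteq> j \<longrightarrow> S!i \<inter> S!j = {})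
     \<and> (\<forall>i. 1 \<le> i \<and> i < length S \<longrightarrow> S!i \<subseteq> nbhd E (S!(i-1)))"

definition height :: "'a set list \<Rightarrow> nat" where
  "height S = length S - 1"

definition rooted :: "'a set list \<Rightarrow> 'a \<Rightarrow> bool" where
  "rooted S v \<longleftrightarrow> S \<noteq> [] \<and> S!0 = {v}"

definition level_disjoint :: "'a set list \<Rightarrow> 'a set list \<Rightarrow> bool" where
  "level_disjoint S T \<longleftrightarrow> (\<forall>i. 1 \<le> i \<and> i \<le> min (height S) (height T) \<longrightarrow> S!i \<inter> T!i = {})"

definition lev :: "'a set list \<Rightarrow> nat \<Rightarrow> 'a set" where
  "lev S i = (if i < length S then S!i else {})"

definition restricts_to :: "'a set list \<Rightarrow> 'a set \<Rightarrow> 'a set list \<Rightarrow> bool" where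
  "restricts_to T W S \<longleftrightarrow> (\<forall>i. lev T i \<inter> W = lev S i)"

end

theory Submission imports Defs begin

definition addu :: "'a set list \<Rightarrow> nat \<Rightarrow> 'a \<Rightarrow> 'a set list" where
  "addu Q m u = (if m < length Q then Q[m := Q!m \<union> {u}] else Q @ [{u}])"

lemma length_addu: "m \<le> length Q \<Longrightarrow> length (addu Q m u) = max (length Q) (Suc m)"
  by (auto simp: addu_def)

lemma lev_addu: "m \<le> length Q \<Longrightarrow> lev (addu Q m u) n = lev Q n \<union> (if n = m then {u} else {})"
  by (auto simp: addu_def lev_def nth_append nth_list_update)

lemma Union_lev: "\<Union>(set S) = (\<Union>n. lev S n)"
  by (auto simp: lev_def in_set_conv_nth split: if_splits) (metis nth_mem)

lemma lp_lev: "level_partition V E S \<longleftrightarrow> S \<noteq> [] \<and> (\<Union>n. lev S n) = V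
   \<and> (\<forall>a b. a \<noteq> b \<longrightarrow> lev S a \<inter> lev S b = {})
   \<and> (\<forall>n. 1 \<le> n \<longrightarrow> lev S n \<subseteq> nbhd E (lev S (n - 1)))"
proof -
  have A: "(\<forall>i<length S. \<forall>j<length S. i \<noteq> j \<longrightarrow> S!i \<inter> S!j = {}) \<longleftrightarrow>
    (\<forall>a b. a \<noteq> b \<longrightarrow> lev S a \<inter> lev S b = {})"
    by (auto simp: lev_def)
  have B: "(\<forall>i. 1 \<le> i \<and> i < length S \<longrightarrow> S!i \<subseteq> nbhd E (S!(i-1))) \<longleftrightarrow>
    (\<forall>n. 1 \<le> n \<longrightarrow> lev S n \<subseteq> nbhd E (lev S (n - 1)))"
    by (auto simp: lev_def)
  show ?thesis unfolding level_partition_def Union_lev A B by simp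
qed

lemma ld_lev: "level_disjoint S T \<longleftrightarrow> (\<forall>i. 1 \<le> i \<longrightarrow> lev S i \<inter> lev T i = {})"
proof -
  have h: "(i \<le> min (height S) (height T)) = (i < length S \<and> i < length T)" if "1 \<le> i" for i
    using that by (auto simp: height_def)
  have "(1 \<le> i \<and> i \<le> min (height S) (height T) \<longrightarrow> S!i \<inter> T!i = {}) \<longleftrightarrow>
        (1 \<le> i \<longrightarrow> lev S i \<inter> lev T i = {})" for i
  proof (cases "1 \<le> i")
    case True
    show ?thesis unfolding h[OF True] by (auto simp: lev_def)
  qed simp
  then show ?thesis unfolding level_disjoint_def by blast
qed

definition good where "good k E VH P v W Q \<longleftrightarrow>
  (\<forall>j<k. level_partition W E (Q j) \<and> rooted (Q j) v \<and> restricts_to (Q j) VH (P j))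
  \<and> (\<forall>j<k. \<forall>j'<k. j \<noteq> j' \<longrightarrow> level_disjoint (Q j) (Q j'))"

lemma lev_nonempty_len: "x \<in> lev S n \<Longrightarrow> n < length S"
  by (auto simp: lev_def split: if_splits)

lemma step:
  assumes g: "good k E VH P v W Q" and VHW: "VH \<subseteq> W" and wW: "w \<in> W" and wv: "w \<noteq> v"
    and Ewu: "E w u" and uW: "u \<notin> W"
  shows "\<exists>Q'. good k E VH P v (insert u W) Q'"
proof -
  have lp: "\<And>j. j<k \<Longrightarrow> level_partition W E (Q j)" and rt: "\<And>j. j<k \<Longrightarrow> rooted (Q j) v"
    and rs: "\<And>j. j<k \<Longrightarrow> restricts_to (Q j) VH (P j)"
    and ld: "\<And>j j'. j<k \<Longrightarrow> j'<k \<Longrightarrow> j \<noteq> j' \<Longrightarrow> level_disjoint (Q j) (Q j')"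
    using g by (auto simp: good_def)
  define ii where "ii j = (SOME i. w \<in> lev (Q j) i)" for j
  have ii: "w \<in> lev (Q j) (ii j)" if "j<k" for j
  proof -
    from lp[OF that] wW have "\<exists>i. w \<in> lev (Q j) i" by (auto simp: lp_lev)
    then show ?thesis unfolding ii_def by (rule someI_ex)
  qed
  have iil: "ii j < length (Q j)" if "j<k" for j using ii[OF that] by (rule lev_nonempty_len)
  have lev0: "lev (Q j) 0 = {v}" if "j<k" for j using rt[OF that] by (auto simp: rooted_def lev_def)
  have ii1: "ii j \<noteq> 0" if "j<k" for j using ii[OF that] lev0[OF that] wv by (metis singletonD)
  have uQ: "u \<notin> lev (Q j) n" if "j<k" for j n using lp[OF that] uW by (auto simp: lp_lev)
  define Q' where "Q' j = addu (Q j) (Suc (ii j)) u" for j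
  have L: "lev (Q' j) n = lev (Q j) n \<union> (if n = Suc (ii j) then {u} else {})" if "j<k" for j n
    unfolding Q'_def using iil[OF that] by (intro lev_addu) simp
  have ne: "Q' j \<noteq> []" if "j<k" for j
    using length_addu[of "Suc (ii j)" "Q j" u] iil[OF that] unfolding Q'_def by auto
  have "good k E VH P v (insert u W) Q'"
    unfolding good_def
  proof (intro conjI allI impI)
    fix j assume j: "j<k"
    note lpj = lp[OF j, unfolded lp_lev]
    show "level_partition (insert u W) E (Q' j)"
      unfolding lp_lev
    proof (intro conjI allI impI)
      show "Q' j \<noteq> []" using ne[OF j] .
      show "(\<Union>n. lev (Q' j) n) = insert u W"
        using lpj by (auto simp: L[OF j] split: if_splits)
      fix a b :: nat assume "a \<noteq> b"
      then show "lev (Q' j) a \<inter> lev (Q' j) b = {}"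
        using lpj uQ[OF j] by (auto simp: L[OF j])
    next
      fix n :: nat assume n: "1 \<le> n"
      have m: "nbhd E A \<subseteq> nbhd E B" if "A \<subseteq> B" for A B using that by (auto simp: nbhd_def)
      have s1: "lev (Q j) (n-1) \<subseteq> lev (Q' j) (n-1)" by (simp add: L[OF j])
      have "lev (Q j) n \<subseteq> nbhd E (lev (Q' j) (n-1))"
        using lpj n m[OF s1] by blast
      moreover have "n = Suc (ii j) \<Longrightarrow> u \<in> nbhd E (lev (Q' j) (n-1))"
        using ii[OF j] Ewu by (auto simp: nbhd_def L[OF j])
      ultimately show "lev (Q' j) n \<subseteq> nbhd E (lev (Q' j) (n - 1))"
        by (auto simp: L[OF j])
    qed
  next
    fix j assume j: "j<k"
      show "rooted (Q' j) v"
        using ne[OF j] L[OF j, of 0] lev0[OF j] unfolding rooted_def lev_def by (auto split: if_splits)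
  next
    fix j assume j: "j<k"
      show "restricts_to (Q' j) VH (P j)"
        using rs[OF j] VHW uW by (auto simp: restricts_to_def L[OF j])
  next
    fix j j' assume j: "j<k" and j': "j' < k" "j \<noteq> j'"
      show "level_disjoint (Q' j) (Q' j')"
        unfolding ld_lev
      proof (intro allI impI)
        fix n :: nat assume n: "1 \<le> n"
        have d: "lev (Q j) n \<inter> lev (Q j') n = {}" using ld[OF j j'] n by (auto simp: ld_lev)
        have "ii j \<noteq> ii j'"
        proof
          assume e: "ii j = ii j'"
          have "w \<in> lev (Q j) (ii j) \<inter> lev (Q j') (ii j)" using ii[OF j] ii[OF j'(1)] e by auto
          moreover have "lev (Q j) (ii j) \<inter> lev (Q j') (ii j) = {}"
            using ld[OF j j'] ii1[OF j] by (auto simp: ld_lev)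
          ultimately show False by auto
        qed
        then show "lev (Q' j) n \<inter> lev (Q' j') n = {}"
          using d uQ[OF j] uQ[OF j'(1)] by (auto simp: L[OF j] L[OF j'(1)])
      qed
  qed
  then show ?thesis by blast
qed


lemma frontier:
  assumes "(del_edges E v)\<^sup>*\<^sup>* x y" "y \<in> W" "y \<noteq> v" "x \<notin> W" "\<forall>a b. E a b \<longrightarrow> E b a"
  shows "\<exists>u w. u \<notin> W \<and> w \<in> W \<and> w \<noteq> v \<and> E w u"
  using assms(1,4)
proof (induction rule: converse_rtranclp_induct)
  case base
  then show ?case using assms(2) by simp
next
  case (step x z)
  show ?case
  proof (cases "z \<in> W")
    case True
    with step.hyps(1) assms(5) show ?thesis
      by (metis del_edges_def step.prems)
  next
    case False
    then show ?thesis using step.IH by blast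
  qed
qed

theorem lemma2:
  fixes V VH :: "'a set" and E EH :: "'a \<Rightarrow> 'a \<Rightarrow> bool" and v :: 'a
    and k :: nat and P :: "nat \<Rightarrow> 'a set list"
  assumes "graph V E" and "connected_graph V E"
    and "v \<in> V"
    and "subgraph VH EH V E" and "v \<in> VH"
    and "\<forall>u\<in>V - {v}. \<exists>w\<in>VH - {v}. (del_edges E v)\<^sup>*\<^sup>* u w"
    and "\<forall>j<k. level_partition VH EH (P j) \<and> rooted (P j) v"
    and "\<forall>j<k. \<forall>j'<k. j \<noteq> j' \<longrightarrow> level_disjoint (P j) (P j')"
  shows "\<exists>Q :: nat \<Rightarrow> 'a set list.
           (\<forall>j<k. level_partition V E (Q j) \<and> rooted (Q j) v \<and> restricts_to (Q j) VH (P j))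
         \<and> (\<forall>j<k. \<forall>j'<k. j \<noteq> j' \<longrightarrow> level_disjoint (Q j) (Q j'))"
proof -
  have fin: "finite V" and sym: "\<forall>a b. E a b \<longrightarrow> E b a" and inV: "\<And>a b. E a b \<Longrightarrow> b \<in> V"
    using assms(1) by (auto simp: graph_def)
  have VHV: "VH \<subseteq> V" and EHE: "\<And>a b. EH a b \<Longrightarrow> E a b" using assms(4) by (auto simp: subgraph_def)
  have base: "good k E VH P v VH P"
    unfolding good_def
  proof (intro conjI allI impI)
    fix j assume j: "j<k"
    have lpj: "level_partition VH EH (P j)" using assms(7) j by auto
    have m: "nbhd EH A \<subseteq> nbhd E A" for A using EHE by (auto simp: nbhd_def)
    show "level_partition VH E (P j)" using lpj m unfolding lp_lev by (meson subset_trans)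
    show "rooted (P j) v" using assms(7) j by auto
    show "restricts_to (P j) VH (P j)" using lpj unfolding lp_lev restricts_to_def by auto
  next
    fix j j' assume "j<k" "j'<k" "j\<noteq>j'"
    then show "level_disjoint (P j) (P j')" using assms(8) by auto
  qed
  have ind: "\<forall>W. VH \<subseteq> W \<and> W \<subseteq> V \<and> card (V - W) = n \<and> (\<exists>Q. good k E VH P v W Q)
     \<longrightarrow> (\<exists>Q. good k E VH P v V Q)" for n
  proof (induction n)
    case 0
    show ?case
    proof (intro allI impI)
      fix W assume H: "VH \<subseteq> W \<and> W \<subseteq> V \<and> card (V - W) = 0 \<and> (\<exists>Q. good k E VH P v W Q)"
      have "finite (V - W)" using fin by simp
      with H have "V - W = {}" by simp
      with H have "W = V" by blast
      with H show "\<exists>Q. good k E VH P v V Q" by blast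
    qed
  next
    case (Suc m)
    show ?case
    proof (intro allI impI)
      fix W assume H: "VH \<subseteq> W \<and> W \<subseteq> V \<and> card (V - W) = Suc m \<and> (\<exists>Q. good k E VH P v W Q)"
      then obtain Q where g: "good k E VH P v W Q" by blast
      have "V - W \<noteq> {}" using H by (intro notI) simp
      then obtain u0 where u0: "u0 \<in> V - W" by blast
      then have "u0 \<noteq> v" using H assms(5) by auto
      with u0 assms(6) obtain w0 where w0: "w0 \<in> VH - {v}" "(del_edges E v)\<^sup>*\<^sup>* u0 w0" by blast
      have "w0 \<in> W" "w0 \<noteq> v" "u0 \<notin> W" using w0(1) H u0 by auto
      from frontier[OF w0(2) this sym]
      obtain u w where uw: "u \<notin> W" "w \<in> W" "w \<noteq> v" "E w u" by blast
      have uV: "u \<in> V" using inV uw(4) .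
      obtain Q' where g': "good k E VH P v (insert u W) Q'"
        using step[OF g _ uw(2,3,4,1)] H by blast
      have e: "V - insert u W = (V - W) - {u}" by blast
      have "u \<in> V - W" using uV uw(1) by blast
      then have "card (V - insert u W) = card (V - W) - 1"
        unfolding e using fin by (intro card_Diff_singleton) simp
      then have "card (V - insert u W) = m" using H by simp
      moreover have "VH \<subseteq> insert u W" "insert u W \<subseteq> V" using H uV by auto
      ultimately show "\<exists>Q. good k E VH P v V Q"
        using Suc.IH g' by blast
    qed
  qed
  have "\<exists>Q. good k E VH P v V Q" using ind[of "card (V - VH)"] VHV base by blast
  then obtain Q where "good k E VH P v V Q" by blast
  then show ?thesis unfolding good_def by blast
qed

end
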